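(* The SRT-definable transformations are not closed under composition: there exist a linear group $\mathbf{G}=(D,\leq,+)$, finite label sets $\Sigma,\Gamma,\Theta$, a $(\Sigma,\Gamma,\mathbf{G})$-SRT $\mathcal{S}_1$ and a $(\Gamma,\Theta,\mathbf{G})$-SRT $\mathcal{S}_2$ such that the composition $[\![\mathcal{S}_1]\!]\cdot[\![\mathcal{S}_2]\!]$ is not equal to $[\![\mathcal{S}]\!]$ for any $(\Sigma,\Theta,\mathbf{G})$-SRT $\mathcal{S}$.
   Context: A linear group is a triple $\mathbf{G}=(D,\leq,+)$ where $D$ is an infinite set, $\leq$ is a total order on $D$, and $(D,+)$ is a group with identity $0$. For finite label sets $\Sigma$ (input) and $\Gamma$ (output), a $(\Sigma,\Gamma,\mathbf{G})$-streaming register transducer (SRT) is a tuple $\mathcal{S}=(Q,q_0,k,R_0,\Delta)$ where $Q$ is a finite set of states, $q_0\in Q$, $k\in\mathbb{N}$ is the number of registers, $R_0\in D^k$ gives the initial register values, and $\Delta\subseteq Q\times\Sigma\times\{>,=,<\}^k\times\{\mathsf{old},\mathsf{new},\mathsf{add}\}^k\times\{1,\dots,k\}\times\Gamma\times Q$ is a finite set of transitions. A configuration is a pair $(q,R)$ with $q\in Q$, $R\in D^k$. A transition $(q,\sigma,l,m,u,\gamma,q')$ enables the step $(q,R)\xrightarrow[(\gamma,d')]{(\sigma,d)}(q',R')$ iff (1) for every $i$, $d>R[i]$, $d=R[i]$ or $d<R[i]$ according as $l[i]$ is $>$, $=$ or $<$; (2) for every $i$, $R'[i]=R[i]$ if $m[i]=\mathsf{old}$,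 $R'[i]=d$ if $m[i]=\mathsf{new}$, $R'[i]=R[i]+d$ if $m[i]=\mathsf{add}$; (3) $d'=R'[u]$. A run over a finite data word $s\in(\Sigma\times D)^*$ of length $n$ generating $t\in(\Gamma\times D)^*$ is a sequence of $n$ steps from $(q_0,R_0)$, the $i$-th reading $s[i]$ and emitting $t[i]$, each enabled by a transition of $\Delta$. For words $s,t$ of equal length, $s\otimes t$ is the word with $i$-th letter $(s[i],t[i])$. $[\![\mathcal{S}]\!]=\{s\otimes t:\text{there is a run over }s\text{ generating }t\}$. For a set $\mathcal{T}_1$ of words over $(\Sigma\times D)\times(\Gamma\times D)$ and a set $\mathcal{T}_2$ of words over $(\Gamma\times D)\times(\Theta\times D)$, the composition $\mathcal{T}_1\cdot\mathcal{T}_2$ is the set of all $s_1\otimes s_2$ with $s_1\in(\Sigma\times D)^*$, $s_2\in(\Theta\times D)^*$ such that there exists $s_3\in(\Gamma\times D)^*$ with $s_1\otimes s_3\in\mathcal{T}_1$ and $s_3\otimes s_2\in\mathcal{T}_2$. *)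

theory Defs
  imports Complex_Main
begin

text \<open>A linear group (D, le, add): D infinite, le a total order on D, (D, add) a group.
  No compatibility between order and group operation is required (as in the paper).\<close>

definition linear_group :: "'d set \<Rightarrow> ('d \<Rightarrow> 'd \<Rightarrow> bool) \<Rightarrow> ('d \<Rightarrow> 'd \<Rightarrow> 'd) \<Rightarrow> bool" where
  "linear_group D le add \<longleftrightarrow>
     infinite D \<and>
     (\<forall>x\<in>D. le x x) \<and>
     (\<forall>x\<in>D. \<forall>y\<in>D. le x y \<and> le y x \<longrightarrow> x = y) \<and>
     (\<forall>x\<in>D. \<forall>y\<in>D. \<forall>z\<in>D. le x y \<and> le y z \<longrightarrow> le x z) \<and>
     (\<forall>x\<in>D. \<forall>y\<in>D. le x y \<or> le y x) \<and>
     (\<forall>x\<in>D. \<forall>y\<in>D. add x y \<in> D) \<and>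
     (\<forall>x\<in>D. \<forall>y\<in>D. \<forall>z\<in>D. add (add x y) z = add x (add y z)) \<and>
     (\<exists>e\<in>D. (\<forall>x\<in>D. add e x = x \<and> add x e = x) \<and>
             (\<forall>x\<in>D. \<exists>y\<in>D. add x y = e \<and> add y x = e))"

datatype cmp = Gt | Eq | Lt
datatype upd = Old | New | Add

text \<open>A transition (q, sigma, l, m, u, gamma, q'); registers are indexed 1..k,
  register i being the list entry at position i - 1.\<close>
type_synonym ('q, 'l) trans = "'q \<times> 'l \<times> cmp list \<times> upd list \<times> nat \<times> 'l \<times> 'q"

record ('q, 'l, 'd) srt =
  states :: "'q set"
  init :: 'q
  nregs :: nat
  init_regs :: "'d list"
  delta :: "('q, 'l) trans set"

definition is_srt :: "'d set \<Rightarrow> 'l set \<Rightarrow> 'l set \<Rightarrow> ('q, 'l, 'd) srt \<Rightarrow> bool" where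
  "is_srt D Sig Gam S \<longleftrightarrow>
     finite (states S) \<and> init S \<in> states S \<and>
     length (init_regs S) = nregs S \<and> set (init_regs S) \<subseteq> D \<and>
     finite (delta S) \<and>
     (\<forall>(q, \<sigma>, l, m, u, \<gamma>, q') \<in> delta S.
        q \<in> states S \<and> \<sigma> \<in> Sig \<and> length l = nregs S \<and> length m = nregs S \<and>
        u \<in> {1..nregs S} \<and> \<gamma> \<in> Gam \<and> q' \<in> states S)"

definition cmp_ok :: "('d \<Rightarrow> 'd \<Rightarrow> bool) \<Rightarrow> cmp \<Rightarrow> 'd \<Rightarrow> 'd \<Rightarrow> bool" where
  "cmp_ok le c d r = (case c of
      Gt \<Rightarrow> le r d \<and> r \<noteq> d
    | Eq \<Rightarrow> d = r
    | Lt \<Rightarrow> le d r \<and> d \<noteq> r)"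

definition upd_val :: "('d \<Rightarrow> 'd \<Rightarrow> 'd) \<Rightarrow> upd \<Rightarrow> 'd \<Rightarrow> 'd \<Rightarrow> 'd" where
  "upd_val add m d r = (case m of Old \<Rightarrow> r | New \<Rightarrow> d | Add \<Rightarrow> add r d)"

definition step_enabled :: "('d \<Rightarrow> 'd \<Rightarrow> bool) \<Rightarrow> ('d \<Rightarrow> 'd \<Rightarrow> 'd) \<Rightarrow> ('q, 'l) trans \<Rightarrow>
    'q \<Rightarrow> 'd list \<Rightarrow> 'l \<Rightarrow> 'd \<Rightarrow> 'l \<Rightarrow> 'd \<Rightarrow> 'q \<Rightarrow> 'd list \<Rightarrow> bool" where
  "step_enabled le add tr q R \<sigma> d \<gamma> d' q2 R2 \<longleftrightarrow>
     (case tr of (p, \<sigma>t, l, m, u, \<gamma>t, p') \<Rightarrow>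
        p = q \<and> \<sigma>t = \<sigma> \<and> \<gamma>t = \<gamma> \<and> p' = q2 \<and>
        length l = length R \<and> length m = length R \<and>
        (\<forall>i<length R. cmp_ok le (l ! i) d (R ! i)) \<and>
        length R2 = length R \<and>
        (\<forall>i<length R. R2 ! i = upd_val add (m ! i) d (R ! i)) \<and>
        1 \<le> u \<and> u \<le> length R \<and> d' = R2 ! (u - 1))"

primrec has_run :: "('d \<Rightarrow> 'd \<Rightarrow> bool) \<Rightarrow> ('d \<Rightarrow> 'd \<Rightarrow> 'd) \<Rightarrow> ('q, 'l) trans set \<Rightarrow>
    'q \<Rightarrow> 'd list \<Rightarrow> (('l \<times> 'd) \<times> ('l \<times> 'd)) list \<Rightarrow> bool" where
  "has_run le add \<Delta> q R [] = True"
| "has_run le add \<Delta> q R (x # w) =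
     (\<exists>tr\<in>\<Delta>. \<exists>q2 R2. step_enabled le add tr q R (fst (fst x)) (snd (fst x))
                         (fst (snd x)) (snd (snd x)) q2 R2 \<and> has_run le add \<Delta> q2 R2 w)"

text \<open>[[S]]: the set of s (x) t with s a data word over D (labels are forced by Delta).\<close>
definition srt_sem :: "'d set \<Rightarrow> ('d \<Rightarrow> 'd \<Rightarrow> bool) \<Rightarrow> ('d \<Rightarrow> 'd \<Rightarrow> 'd) \<Rightarrow> ('q, 'l, 'd) srt \<Rightarrow>
    (('l \<times> 'd) \<times> ('l \<times> 'd)) list set" where
  "srt_sem D le add S =
     {w. (\<forall>x\<in>set w. snd (fst x) \<in> D) \<and> has_run le add (delta S) (init S) (init_regs S) w}"

definition compose :: "(('a \<times> 'b) list) set \<Rightarrow> (('b \<times> 'c) list) set \<Rightarrow> (('a \<times> 'c) list) set" where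
  "compose T1 T2 = {zip s1 s2 | s1 s2. length s1 = length s2 \<and>
      (\<exists>s3. length s3 = length s1 \<and> zip s1 s3 \<in> T1 \<and> zip s3 s2 \<in> T2)}"

end

theory Submission
  imports Defs
begin

definition ev :: "real \<Rightarrow> bool" where "ev x \<longleftrightarrow> (\<exists>k::int. x = 2 * of_int k)"

definition ple :: "real \<Rightarrow> real \<Rightarrow> bool" where
  "ple x y \<longleftrightarrow> (ev x \<and> \<not> ev y) \<or> (ev x = ev y \<and> x \<le> y)"

definition S1 :: "(nat, nat, real) srt" where
  "S1 = \<lparr>states = {0}, init = 0, nregs = 1, init_regs = [1],
         delta = {(0, 0, [Lt], [Add], 1, 0, 0)}\<rparr>"

definition S2 :: "(nat, nat, real) srt" where
  "S2 = \<lparr>states = {0}, init = 0, nregs = 1, init_regs = [0],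
         delta = {(0, 0, [Gt], [Old], 1, 1, 0)}\<rparr>"

lemma ev_int: "ev (2 * of_int k)" unfolding ev_def by blast

lemma not_ev_odd: "\<not> ev (2 * of_int k + 1)"
proof
  assume "ev (2 * of_int k + 1)"
  then obtain j :: int where "2 * of_int k + 1 = (2 * of_int j :: real)" unfolding ev_def by blast
  then have "real_of_int (2 * k + 1) = real_of_int (2 * j)" by simp
  then have "2 * k + 1 = 2 * j" by (simp only: of_int_eq_iff)
  then show False by presburger
qed

lemma lg: "linear_group \<int> ple (+)"
proof -
  have "infinite (\<int> :: real set)"
  proof
    assume "finite (\<int> :: real set)"
    moreover have "(\<int> :: real set) = range real_of_int" by (auto simp: Ints_def)
    moreover have "inj real_of_int" by (auto simp: inj_def)
    ultimately show False using finite_imageD[of real_of_int UNIV] infinite_UNIV_int by simp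
  qed
  moreover have "\<forall>x\<in>\<int>. \<forall>y\<in>\<int>. x + y \<in> (\<int>::real set)" by (auto intro: Ints_add)
  moreover have "\<forall>x\<in>\<int>. \<exists>y\<in>\<int>. x + y = 0 \<and> y + x = (0::real)"
  proof
    fix x :: real assume "x \<in> \<int>"
    then show "\<exists>y\<in>\<int>. x + y = 0 \<and> y + x = (0::real)"
      by (intro bexI[of _ "- x"]) (simp_all add: Ints_minus)
  qed
  moreover have "\<forall>x y. ple x y \<and> ple y x \<longrightarrow> x = y" unfolding ple_def by auto
  moreover have "\<forall>x y z. ple x y \<and> ple y z \<longrightarrow> ple x z" unfolding ple_def by auto
  moreover have "\<forall>x y. ple x y \<or> ple y x" unfolding ple_def by auto
  moreover have "\<forall>x. ple x x" unfolding ple_def by auto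
  moreover have "\<forall>x\<in>\<int>. (0::real) + x = x \<and> x + 0 = x" by simp
  moreover have "(0::real) \<in> \<int>" by simp
  moreover have "\<forall>x\<in>\<int>. \<forall>y\<in>\<int>. \<forall>z\<in>\<int>. x + y + z = x + (y + (z::real))" by (simp add: add.assoc)
  ultimately show ?thesis unfolding linear_group_def
    apply (intro conjI)
    apply assumption
    apply blast
    apply blast
    apply blast
    apply blast
    apply assumption
    apply assumption
    apply (rule bexI[of _ 0])
    apply (intro conjI)
    apply assumption+
    done
qed

lemma cell1:
  fixes xx yy r n :: real
  assumes "ev xx" "\<not> ev yy" "\<bar>r\<bar> < n" "xx = 2 * n" "yy = - 2 * n - 1"
  shows "cmp_ok ple c xx r = cmp_ok ple c yy r"
proof (cases "ev r")
  case True
  then show ?thesis using assms unfolding cmp_ok_def ple_def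
    by (cases c) auto
next
  case False
  then show ?thesis using assms unfolding cmp_ok_def ple_def
    by (cases c) auto
qed

lemma cell:
  fixes N :: int
  assumes N: "\<forall>r\<in>set R. \<bar>r\<bar> < of_int N"
  shows "\<forall>i<length R. \<forall>c. cmp_ok ple c (2 * of_int N) (R ! i) = cmp_ok ple c (2 * of_int (- N - 1) + 1) (R ! i)"
proof (intro allI impI)
  fix i c assume i: "i < length R"
  have rb: "\<bar>R ! i\<bar> < of_int N" using N i by simp
  have ex: "ev (2 * of_int N)" by (rule ev_int)
  have ny: "\<not> ev (2 * of_int (- N - 1) + 1)" by (rule not_ev_odd)
  have yv: "(2 * of_int (- N - 1) + 1 :: real) = - 2 * of_int N - 1" by simp
  show "cmp_ok ple c (2 * of_int N) (R ! i) = cmp_ok ple c (2 * of_int (- N - 1) + 1) (R ! i)"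
    by (rule cell1[OF ex ny rb refl yv])
qed

lemma transfer_step:
  assumes "step_enabled le add tr q R \<sigma> x \<gamma> d' q2 R2"
    and "\<forall>i<length R. \<forall>c. cmp_ok le c x (R ! i) = cmp_ok le c y (R ! i)"
  shows "\<exists>d'' R2'. step_enabled le add tr q R \<sigma> y \<gamma> d'' q2 R2'"
proof -
  obtain p \<sigma>t l m u \<gamma>t p' where tr: "tr = (p, \<sigma>t, l, m, u, \<gamma>t, p')" by (cases tr) auto
  define R2' where "R2' = map (\<lambda>i. upd_val add (m ! i) y (R ! i)) [0..<length R]"
  have "step_enabled le add tr q R \<sigma> y \<gamma> (R2' ! (u - 1)) q2 R2'"
    using assms unfolding step_enabled_def tr R2'_def by auto
  then show ?thesis by blast
qed

lemma S1_word:
  "zip [(a::nat, d::real)] [c] \<in> srt_sem \<int> ple (+) S1 \<Longrightarrow> snd c = 1 + d"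
  unfolding srt_sem_def S1_def by (auto simp: step_enabled_def upd_val_def)

lemma S2_word:
  "zip [(c::nat \<times> real)] [b] \<in> srt_sem \<int> ple (+) S2 \<Longrightarrow> cmp_ok ple Gt (snd c) 0"
  unfolding srt_sem_def S2_def by (auto simp: step_enabled_def)

theorem theorem3p14:
  shows "\<exists>(D :: real set) (le :: real \<Rightarrow> real \<Rightarrow> bool) add
            (Sig :: nat set) (Gam :: nat set) (The :: nat set)
            (S1 :: (nat, nat, real) srt) (S2 :: (nat, nat, real) srt).
     linear_group D le add \<and> finite Sig \<and> finite Gam \<and> finite The \<and>
     is_srt D Sig Gam S1 \<and> is_srt D Gam The S2 \<and>
     (\<forall>S :: (nat, nat, real) srt. is_srt D Sig The S \<longrightarrow>
        compose (srt_sem D le add S1) (srt_sem D le add S2) \<noteq> srt_sem D le add S)"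
proof (intro exI conjI allI impI)
  show "linear_group \<int> ple (+)" by (rule lg)
  show "finite {0::nat}" by simp
  show "finite {0::nat}" by simp
  show "finite {1::nat}" by simp
  show "is_srt \<int> {0} {0} S1" unfolding is_srt_def S1_def by simp
  show "is_srt \<int> {0} {1} S2" unfolding is_srt_def S2_def by simp
  fix S :: "(nat, nat, real) srt"
  assume srt: "is_srt \<int> {0} {1} S"
  show "compose (srt_sem \<int> ple (+) S1) (srt_sem \<int> ple (+) S2) \<noteq> srt_sem \<int> ple (+) S"
  proof
    assume eq: "compose (srt_sem \<int> ple (+) S1) (srt_sem \<int> ple (+) S2) = srt_sem \<int> ple (+) S"
    define R where "R = init_regs S"
    have RZ: "set R \<subseteq> \<int>" using srt unfolding is_srt_def R_def by simp
    define M where "M = Max (insert 0 (abs ` set R))"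
    define N :: int where "N = 1 + \<lceil>M\<rceil>"
    have M0: "0 \<le> M" unfolding M_def by simp
    have N1: "1 \<le> N" using M0 unfolding N_def by simp
    have Nb: "\<forall>r\<in>set R. \<bar>r\<bar> < of_int N"
    proof
      fix r assume "r \<in> set R"
      then have "\<bar>r\<bar> \<le> M" unfolding M_def by (intro Max_ge) auto
      moreover have "M \<le> of_int \<lceil>M\<rceil>" by (rule le_of_int_ceiling)
      ultimately show "\<bar>r\<bar> < of_int N" unfolding N_def by linarith
    qed
    define x :: real where "x = 2 * of_int N"
    define y :: real where "y = 2 * of_int (- N - 1) + 1"
    have cellxy: "\<forall>i<length R. \<forall>c. cmp_ok ple c x (R ! i) = cmp_ok ple c y (R ! i)"
      unfolding x_def y_def by (rule cell[OF Nb])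
    have xZ: "x \<in> \<int>" unfolding x_def by simp
    have yZ: "y \<in> \<int>" unfolding y_def by simp
    have evx: "ev x" unfolding x_def by (rule ev_int)
    have n1: "\<not> ev 1" using not_ev_odd[of 0] by simp
    have nx1: "\<not> ev (x + 1)" unfolding x_def using not_ev_odd[of N] by simp
    have ev0: "ev 0" using ev_int[of 0] by simp
    have x1: "x \<noteq> 1" using evx n1 by auto
    have w1: "zip [(0::nat, x)] [(0::nat, 1 + x)] \<in> srt_sem \<int> ple (+) S1"
    proof -
      have "cmp_ok ple Lt x 1" using evx n1 x1 unfolding cmp_ok_def ple_def by auto
      then have "step_enabled ple (+) (0, 0, [Lt], [Add], 1, 0, 0) 0 [1] 0 x 0 (1 + x) 0 [1 + x]"
        unfolding step_enabled_def upd_val_def by simp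
      then show ?thesis using xZ unfolding srt_sem_def S1_def by auto
    qed
    have w2: "zip [(0::nat, 1 + x)] [(1::nat, 0::real)] \<in> srt_sem \<int> ple (+) S2"
    proof -
      have "1 + x \<in> \<int>" using xZ by simp
      moreover have "1 + x \<noteq> 0" using nx1 ev0 by (auto simp: add.commute)
      moreover have "ple 0 (1 + x)" using nx1 ev0 unfolding ple_def by (auto simp: add.commute)
      ultimately have "step_enabled ple (+) (0, 0, [Gt], [Old], Suc 0, Suc 0, 0) 0 [0] 0 (1 + x) (Suc 0) 0 0 [0]"
        unfolding step_enabled_def upd_val_def cmp_ok_def by simp
      then show ?thesis using \<open>1 + x \<in> \<int>\<close> unfolding srt_sem_def S2_def by (auto simp: One_nat_def)
    qed
    have "zip [(0::nat, x)] [(1::nat, 0::real)] \<in> compose (srt_sem \<int> ple (+) S1) (srt_sem \<int> ple (+) S2)"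
      unfolding compose_def using w1 w2 by (intro CollectI exI[of _ "[(0::nat, x)]"] exI[of _ "[(1::nat, 0::real)]"] conjI exI[of _ "[(0::nat, 1 + x)]"]) simp_all
    then have "[((0::nat, x), (1::nat, 0::real))] \<in> srt_sem \<int> ple (+) S" using eq by simp
    then obtain tr q2 R2 where tr: "tr \<in> delta S"
      and st: "step_enabled ple (+) tr (init S) R 0 x 1 0 q2 R2"
      unfolding srt_sem_def R_def by auto
    obtain d'' R2' where st': "step_enabled ple (+) tr (init S) R 0 y 1 d'' q2 R2'"
      using transfer_step[OF st cellxy] by blast
    have "[((0::nat, y), (1::nat, d''))] \<in> srt_sem \<int> ple (+) S"
      unfolding srt_sem_def R_def[symmetric] using yZ tr st' by auto
    then have "[((0::nat, y), (1::nat, d''))] \<in> compose (srt_sem \<int> ple (+) S1) (srt_sem \<int> ple (+) S2)"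
      using eq by simp
    then obtain s1 s2 s3 where z: "[((0::nat, y), (1::nat, d''))] = zip s1 s2" and l: "length s1 = length s2"
      and l3: "length s3 = length s1" and m1: "zip s1 s3 \<in> srt_sem \<int> ple (+) S1"
      and m2: "zip s3 s2 \<in> srt_sem \<int> ple (+) S2"
      unfolding compose_def by blast
    have "length s1 = 1" using z l by (metis length_zip min.idem list.size(3) list.size(4) add_0 One_nat_def)
    then obtain a b c where s1: "s1 = [a]" and s2: "s2 = [b]" and s3: "s3 = [c]"
      using l l3 by (metis One_nat_def length_0_conv length_Suc_conv)
    have a: "a = (0, y)" using z s1 s2 by simp
    have "snd c = 1 + y" using S1_word m1 unfolding s1 s3 a by blast
    moreover have "cmp_ok ple Gt (snd c) 0" using S2_word m2 unfolding s3 s2 by blast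
    ultimately have "cmp_ok ple Gt (1 + y) 0" by simp
    moreover have "1 + y = 2 * of_int (- N)" unfolding y_def by simp
    ultimately have "ple 0 (2 * of_int (- N))" unfolding cmp_ok_def by simp
    moreover have "ev (2 * of_int (- N))" by (rule ev_int)
    ultimately have "(0::real) \<le> 2 * of_int (- N)" using ev0 unfolding ple_def by auto
    then show False using N1 by simp
  qed
qed

end
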